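(* Let $n \in \mathbb{Z}_{\geqslant 2}$ and $m \in \mathbb{Z}_{\geqslant 1}$. Then $$\prod_{j=1}^{\infty}\left(1 - \frac{1}{n^j}\right) n^{\varphi(m)} \leqslant \Phi_m(n) \leqslant \prod_{j=1}^{\infty}\left(1 - \frac{1}{n^j}\right)^{-1} n^{\varphi(m)}.$$
   Context: $\Phi_m(X)$ denotes the $m$th cyclotomic polynomial and $\varphi$ is Euler's totient function. *)

theory Defs
  imports "HOL-Complex_Analysis.Complex_Analysis" "HOL-Number_Theory.Number_Theory"
begin

definition cyclotomic :: "nat \<Rightarrow> complex poly" where
  "cyclotomic m = (\<Prod>k\<in>{k. 1 \<le> k \<and> k \<le> m \<and> coprime k m}.
       [:- cis (2 * pi * real k / real m), 1:])"

end

theory Submission imports Defs "HOL-Computational_Algebra.Squarefree" "HOL-Computational_Algebra.Fundamental_Theorem_Algebra" begin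

lemma roots_unity_poly:
  assumes m: "m > 0"
  shows "(z::complex) ^ m - 1 = (\<Prod>w\<in>{w. w ^ m = 1}. z - w)"
proof -
  define p :: "complex poly" where "p = [:-1:] + Polynomial.monom 1 m"
  have pz: "poly p x = x ^ m - 1" for x by (simp add: p_def poly_monom)
  have pd: "poly (pderiv p) x = of_nat m * x ^ (m - 1)" for x
    by (simp add: p_def pderiv_monom pderiv_add poly_monom)
  have rs: "rsquarefree p"
    unfolding rsquarefree_roots
  proof (intro allI notI)
    fix a assume "poly p a = 0 \<and> poly (pderiv p) a = 0"
    then have "a ^ m = 1" "of_nat m * a ^ (m - 1) = 0" using pz pd by auto
    then show False using m by (auto simp: power_0_left split: if_splits)
  qed
  have lc: "lead_coeff p = 1"
  proof -
    have "lead_coeff p = lead_coeff (Polynomial.monom (1::complex) m)"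
      unfolding p_def using m by (intro lead_coeff_add_le) (simp add: degree_monom_eq)
    then show ?thesis by (simp add: degree_monom_eq)
  qed
  have "p = (\<Prod>w | poly p w = 0. [:-w, 1:])"
    using complex_poly_decompose_rsquarefree[OF rs] lc by simp
  then have "poly p z = (\<Prod>w | poly p w = 0. poly [:-w, 1:] z)"
    by (metis poly_prod)
  then show ?thesis by (simp add: pz)
qed


lemma roots_unity_prod:
  assumes m: "m > 0"
  shows "(z::complex) ^ m - 1 = (\<Prod>k\<in>{1..m}. z - cis (2 * pi * real k / real m))"
proof -
  let ?g = "\<lambda>k. z - cis (2 * pi * real k / real m)"
  have "z ^ m - 1 = (\<Prod>w\<in>{w. w ^ m = 1}. z - w)" by (rule roots_unity_poly[OF m])
  also have "\<dots> = (\<Prod>k\<in>{..<m}. ?g k)"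
    by (rule prod.reindex_bij_betw[symmetric, OF Complex.bij_betw_roots_unity[OF m]])
  also have "{..<m} = insert 0 {1..<m}" using m by auto
  also have "(\<Prod>k\<in>insert 0 {1..<m}. ?g k) = ?g 0 * (\<Prod>k\<in>{1..<m}. ?g k)"
    by (simp add: prod.insert)
  also have "?g 0 = ?g m" using m by (simp add: complex_eq_iff)
  also have "?g m * (\<Prod>k\<in>{1..<m}. ?g k) = (\<Prod>k\<in>insert m {1..<m}. ?g k)"
    by (simp add: prod.insert)
  also have "insert m {1..<m} = {1..m}" using m by auto
  finally show ?thesis .
qed

lemma divisor_decomp_bij:
  assumes m: "m > (0::nat)"
  shows "bij_betw (\<lambda>(d, j). (m div d) * j)
           (SIGMA d:{d. d dvd m}. {j. 1 \<le> j \<and> j \<le> d \<and> coprime j d}) {1..m}"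
proof (rule bij_betw_imageI)
  show "inj_on (\<lambda>(d, j). (m div d) * j) (SIGMA d:{d. d dvd m}. {j. 1 \<le> j \<and> j \<le> d \<and> coprime j d})"
  proof (rule inj_onI)
    fix x y assume xA: "x \<in> (SIGMA d:{d. d dvd m}. {j. 1 \<le> j \<and> j \<le> d \<and> coprime j d})"
      and yA: "y \<in> (SIGMA d:{d. d dvd m}. {j. 1 \<le> j \<and> j \<le> d \<and> coprime j d})"
      and xy: "(\<lambda>(d, j). (m div d) * j) x = (\<lambda>(d, j). (m div d) * j) y"
    obtain d j where x: "x = (d, j)" by force
    obtain d' j' where y: "y = (d', j')" by force
    have d: "d dvd m" and j: "1 \<le> j" "j \<le> d" "coprime j d" using xA x by auto
    have d': "d' dvd m" and j': "1 \<le> j'" "j' \<le> d'" "coprime j' d'" using yA y by auto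
    have eq: "m div d * j = m div d' * j'" using xy x y by simp
    have g: "gcd (m div e * i) m = m div e" if "e dvd m" "coprime i e" for e i
    proof -
      have "m = m div e * e" using that by simp
      then have "gcd (m div e * i) m = gcd (m div e * i) (m div e * e)" by simp
      also have "\<dots> = m div e * gcd i e" by (simp add: gcd_mult_distrib_nat)
      finally show ?thesis using that by simp
    qed
    have "m div d = m div d'" using g[OF d j(3)] g[OF d' j'(3)] eq by simp
    moreover have "d = m div (m div d)" "d' = m div (m div d')" using d d' m
      by (auto simp: div_div_eq_right elim!: dvdE)
    ultimately have dd: "d = d'" by simp
    moreover have "m div d > 0" using d m by (auto elim!: dvdE)
    ultimately show "x = y" using eq x y by simp
  qed
  show "(\<lambda>(d, j). (m div d) * j) ` (SIGMA d:{d. d dvd m}. {j. 1 \<le> j \<and> j \<le> d \<and> coprime j d}) = {1..m}"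
  proof (intro equalityI subsetI)
    fix k assume "k \<in> (\<lambda>(d, j). (m div d) * j) ` (SIGMA d:{d. d dvd m}. {j. 1 \<le> j \<and> j \<le> d \<and> coprime j d})"
    then obtain d j where d: "d dvd m" and j: "1 \<le> j" "j \<le> d" and k: "k = m div d * j" by auto
    have "m div d > 0" using d m by (auto elim!: dvdE)
    then have "1 \<le> k" using j k by simp
    moreover have "k \<le> m div d * d" using j k by simp
    ultimately show "k \<in> {1..m}" using d by simp
  next
    fix k assume k: "k \<in> {1..m}"
    define g where "g = gcd k m"
    have gpos: "g > 0" using m by (simp add: g_def)
    have gk: "g dvd k" and gm: "g dvd m" by (simp_all add: g_def)
    define d where "d = m div g"
    define j where "j = k div g"
    have "d dvd m" using gm by (simp add: d_def div_dvd_div[of g m m] ) (metis dvd_def dvd_div_mult_self mult.commute)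
    moreover have "coprime j d" unfolding j_def d_def g_def using m by (intro div_gcd_coprime) auto
    moreover have "1 \<le> j" using k gk gpos by (auto simp: j_def elim!: dvdE)
    moreover have "j \<le> d" using k gpos by (simp add: j_def d_def div_le_mono)
    moreover have "m div d * j = k" using gk gm gpos m
      by (auto simp: d_def j_def div_div_eq_right elim!: dvdE)
    ultimately show "k \<in> (\<lambda>(d, j). (m div d) * j) ` (SIGMA d:{d. d dvd m}. {j. 1 \<le> j \<and> j \<le> d \<and> coprime j d})"
      by (intro image_eqI[of _ _ "(d, j)"]) auto
  qed
qed

lemma cyclotomic_prod:
  assumes m: "m > 0"
  shows "(z::complex) ^ m - 1 = (\<Prod>d\<in>{d. d dvd m}. poly (cyclotomic d) z)"
proof -
  let ?S = "\<lambda>d. {j. 1 \<le> j \<and> j \<le> d \<and> coprime j d}"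
  have fin: "finite {d. d dvd m}" using m by simp
  have "(\<Prod>d\<in>{d. d dvd m}. poly (cyclotomic d) z)
      = (\<Prod>d\<in>{d. d dvd m}. \<Prod>j\<in>?S d. z - cis (2 * pi * real j / real d))"
    by (simp add: cyclotomic_def poly_prod)
  also have "\<dots> = (\<Prod>(d, j)\<in>(SIGMA d:{d. d dvd m}. ?S d). z - cis (2 * pi * real j / real d))"
    using fin by (intro prod.Sigma) auto
  also have "\<dots> = (\<Prod>(d, j)\<in>(SIGMA d:{d. d dvd m}. ?S d). z - cis (2 * pi * real ((m div d) * j) / real m))"
  proof (intro prod.cong refl, clarsimp)
    fix d j assume d: "d dvd m"
    then have dpos: "d > 0" using m by (auto intro!: Nat.gr0I)
    have "real (m div d) = real m / real d" using d by (simp add: real_of_nat_div)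
    then have "2 * pi * (real (m div d) * real j) / real m = 2 * pi * real j / real d"
      using m dpos by (simp add: field_simps)
    then show "cis (2 * pi * real j / real d) = cis (2 * pi * (real (m div d) * real j) / real m)"
      by simp
  qed
  also have "\<dots> = (\<Prod>k\<in>{1..m}. z - cis (2 * pi * real k / real m))"
    using prod.reindex_bij_betw[OF divisor_decomp_bij[OF m], of "\<lambda>k. z - cis (2 * pi * real k / real m)"]
    by (simp add: case_prod_unfold)
  also have "\<dots> = z ^ m - 1" by (rule roots_unity_prod[OF m, symmetric])
  finally show ?thesis ..
qed


definition mu :: "nat \<Rightarrow> real" where
  "mu c = (if squarefree c then (-1) ^ card (prime_factors c) else 0)"

lemma mu_range: "mu c \<le> 1 \<and> mu c \<ge> -1"
proof -
  have "(-1::real) ^ k = 1 \<or> (-1::real) ^ k = -1" for k by (induct k) auto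
  from this[of "card (prime_factors c)"] show ?thesis unfolding mu_def by auto
qed

lemma mu_prime_mult:
  assumes p: "prime p" and c: "c > 0" and nd: "\<not> p dvd c"
  shows "mu (p * c) = - mu c"
proof -
  have sq: "squarefree (p * c) \<longleftrightarrow> squarefree c"
  proof
    assume "squarefree (p * c)" then show "squarefree c" by (rule squarefree_multD)
  next
    assume "squarefree c"
    then show "squarefree (p * c)"
      using squarefree_mult_coprime[OF prime_imp_coprime[OF p nd] squarefree_prime[OF p]] by blast
  qed
  have pf: "prime_factors (p * c) = insert p (prime_factors c)"
    using p c by (simp add: prime_factors_product prime_prime_factors prime_gt_0_nat)
  have "p \<notin> prime_factors c" using nd by (simp add: in_prime_factors_iff)
  then have "card (prime_factors (p * c)) = Suc (card (prime_factors c))"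
    by (simp add: pf)
  then show ?thesis by (simp add: mu_def sq)
qed

lemma mu_sum:
  assumes k: "k > (0::nat)"
  shows "(\<Sum>c\<in>{c. c dvd k}. mu c) = (if k = 1 then 1 else 0)"
proof (cases "k = 1")
  case True
  then show ?thesis by (simp add: mu_def)
next
  case False
  then obtain p where p: "prime p" "p dvd k" using prime_factor_nat by blast
  define D1 where "D1 = {c. c dvd k \<and> \<not> p dvd c}"
  define D2 where "D2 = {c. c dvd k \<and> p dvd c}"
  have fin: "finite {c. c dvd k}" using k by simp
  have fin1: "finite D1" and fin2: "finite D2" using fin by (auto simp: D1_def D2_def)
  have split: "{c. c dvd k} = D1 \<union> D2" "D1 \<inter> D2 = {}" by (auto simp: D1_def D2_def)
  have inj: "inj_on (\<lambda>c. p * c) D1" using p by (auto simp: inj_on_def prime_gt_0_nat)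
  have sub: "(\<lambda>c. p * c) ` D1 \<subseteq> D2" using p by (auto simp: D1_def D2_def intro: divides_mult prime_imp_coprime)
  have zero: "mu c = 0" if "c \<in> D2 - (\<lambda>c. p * c) ` D1" for c
  proof -
    from that have c: "c dvd k" "p dvd c" by (auto simp: D2_def)
    then obtain c' where c': "c = p * c'" by (auto elim!: dvdE)
    have "c' dvd k" using c c' by (auto intro: dvd_mult_right)
    with that c' have "p dvd c'" by (auto simp: D1_def)
    then have "p ^ 2 dvd c" using c' by (auto simp: power2_eq_square)
    then have "\<not> squarefree c" using p by (auto dest: squarefreeD simp: prime_nat_iff)
    then show ?thesis by (simp add: mu_def)
  qed
  have "(\<Sum>c\<in>D2. mu c) = (\<Sum>c\<in>(\<lambda>c. p * c) ` D1. mu c)"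
    using zero sub fin2 by (intro sum.mono_neutral_right) auto
  also have "\<dots> = (\<Sum>c\<in>D1. mu (p * c))" using inj by (simp add: sum.reindex)
  also have "\<dots> = (\<Sum>c\<in>D1. - mu c)"
  proof (intro sum.cong refl)
    fix c assume "c \<in> D1"
    then have "c dvd k" "\<not> p dvd c" by (auto simp: D1_def)
    moreover have "c > 0" using \<open>c dvd k\<close> k by (auto intro!: Nat.gr0I)
    ultimately show "mu (p * c) = - mu c" using p by (intro mu_prime_mult) auto
  qed
  finally have "(\<Sum>c\<in>D2. mu c) = - (\<Sum>c\<in>D1. mu c)" by (simp add: sum_negf)
  then have "(\<Sum>c\<in>{c. c dvd k}. mu c) = 0"
    using split fin1 fin2 by (simp add: sum.union_disjoint)
  then show ?thesis using False by simp
qed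

lemma mobius_inversion:
  fixes L :: "nat \<Rightarrow> real"
  assumes m: "m > 0"
  shows "(\<Sum>d\<in>{d. d dvd m}. \<Sum>e\<in>{e. e dvd d}. mu (d div e) * L e) = L m"
proof -
  let ?D = "{d. d dvd m}"
  have fin: "finite ?D" using m by simp
  have "(\<Sum>d\<in>?D. \<Sum>e\<in>{e. e dvd d}. mu (d div e) * L e)
      = (\<Sum>d\<in>?D. \<Sum>e\<in>?D. if e dvd d then mu (d div e) * L e else 0)"
  proof (rule sum.cong[OF refl])
    fix d assume "d \<in> ?D"
    then have "{e. e dvd d} = {e \<in> ?D. e dvd d}" by (auto intro: dvd_trans)
    then show "(\<Sum>e\<in>{e. e dvd d}. mu (d div e) * L e) = (\<Sum>e\<in>?D. if e dvd d then mu (d div e) * L e else 0)"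
      using sum.inter_filter[OF fin, of "\<lambda>e. mu (d div e) * L e" "\<lambda>e. e dvd d"] by simp
  qed
  also have "\<dots> = (\<Sum>e\<in>?D. \<Sum>d\<in>?D. if e dvd d then mu (d div e) * L e else 0)"
    by (rule sum.swap)
  also have "\<dots> = (\<Sum>e\<in>?D. if e = m then L e else 0)"
  proof (intro sum.cong refl)
    fix e assume e: "e \<in> ?D"
    then have epos: "e > 0" using m by (auto intro!: Nat.gr0I)
    have "(\<Sum>d\<in>?D. if e dvd d then mu (d div e) * L e else 0) = (\<Sum>d\<in>{d \<in> ?D. e dvd d}. mu (d div e) * L e)"
      using sum.inter_filter[OF fin, of "\<lambda>d. mu (d div e) * L e" "\<lambda>d. e dvd d"] by simp
    also have "{d \<in> ?D. e dvd d} = (\<lambda>c. e * c) ` {c. c dvd m div e}"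
    proof (intro equalityI subsetI)
      fix d assume "d \<in> {d \<in> ?D. e dvd d}"
      then have dm: "d dvd m" and ed: "e dvd d" by auto
      from ed obtain c where dc: "d = e * c" by (rule dvdE)
      have "d = e * c" "e * c dvd m" using dc dm by auto
      moreover have "c dvd m div e"
      proof -
        from \<open>e * c dvd m\<close> obtain t where "m = e * c * t" by (rule dvdE)
        then have "m div e = c * t" using epos by (simp add: mult.assoc)
        then show ?thesis by simp
      qed
      ultimately show "d \<in> (\<lambda>c. e * c) ` {c. c dvd m div e}" by auto
    next
      fix d assume "d \<in> (\<lambda>c. e * c) ` {c. c dvd m div e}"
      then obtain c where "d = e * c" "c dvd m div e" by auto
      moreover from \<open>c dvd m div e\<close> obtain t where t: "m div e = c * t" by (rule dvdE)
      moreover have "m = e * (m div e)" using e by simp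
      ultimately have "m = d * t" by (simp add: mult.assoc)
      then show "d \<in> {d \<in> ?D. e dvd d}" using \<open>d = e * c\<close> by auto
    qed
    also have "(\<Sum>d\<in>(\<lambda>c. e * c) ` {c. c dvd m div e}. mu (d div e) * L e) = (\<Sum>c\<in>{c. c dvd m div e}. mu c * L e)"
      using epos by (subst sum.reindex) (auto simp: inj_on_def)
    also have "\<dots> = (\<Sum>c\<in>{c. c dvd m div e}. mu c) * L e" by (simp add: sum_distrib_right)
    also have "\<dots> = (if e = m then L e else 0)"
    proof -
      have pos: "m div e > 0" using e m epos by (auto elim!: dvdE)
      have "m div e = 1 \<longleftrightarrow> e = m" using e m by (auto elim!: dvdE)
      then show ?thesis using mu_sum[OF pos] by simp
    qed
    finally show "(\<Sum>d\<in>?D. if e dvd d then mu (d div e) * L e else 0) = (if e = m then L e else 0)" .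
  qed
  also have "\<dots> = L m" using fin by (simp add: sum.delta)
  finally show ?thesis .
qed


lemma cyclo_value:
  assumes n: "n \<ge> (2::nat)" and m: "m > 0"
  shows "poly (cyclotomic m) (of_nat n) = complex_of_real (real n ^ totient m *
           exp (\<Sum>e\<in>{e. e dvd m}. mu (m div e) * ln (1 - 1 / real n ^ e)))"
  using m
proof (induction m rule: less_induct)
  case (less m)
  define Lf where "Lf = (\<lambda>d::nat. ln (1 - 1 / real n ^ d))"
  define S where "S = (\<lambda>m::nat. \<Sum>e\<in>{e. e dvd m}. mu (m div e) * Lf e)"
  define C where "C = (\<lambda>d. poly (cyclotomic d) (of_nat n :: complex))"
  define D where "D = {d. d dvd m}"
  have m: "m > 0" by (rule less.prems)
  have finD: "finite D" using m by (simp add: D_def)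
  have mD: "m \<in> D" by (simp add: D_def)
  have IH: "C d = complex_of_real (real n ^ totient d * exp (S d))" if "d \<in> D - {m}" for d
  proof -
    from that have "d dvd m" "d \<noteq> m" by (auto simp: D_def)
    then have "d \<le> m" "d > 0" using m by (auto intro!: Nat.gr0I dvd_imp_le)
    with \<open>d \<noteq> m\<close> have "d < m" "d > 0" by auto
    then show ?thesis using less.IH[of d] by (simp add: C_def S_def Lf_def)
  qed
  have h1: "of_nat n ^ m - 1 = (\<Prod>d\<in>D. C d)"
    unfolding C_def D_def by (rule cyclotomic_prod[OF m])
  have h2: "(\<Prod>d\<in>D. C d) = C m * (\<Prod>d\<in>D - {m}. C d)"
    using finD mD by (rule prod.remove)
  have h3: "(\<Prod>d\<in>D - {m}. C d) = complex_of_real (\<Prod>d\<in>D - {m}. real n ^ totient d * exp (S d))"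
    using IH by (simp add: of_real_prod)
  have h4: "(\<Prod>d\<in>D - {m}. real n ^ totient d * exp (S d))
      = real n ^ (\<Sum>d\<in>D - {m}. totient d) * exp (\<Sum>d\<in>D - {m}. S d)"
    using finD by (simp add: prod.distrib power_sum exp_sum)
  have tot: "(\<Sum>d\<in>D. totient d) = m" unfolding D_def by (rule totient_divisor_sum)
  then have h5: "(\<Sum>d\<in>D - {m}. totient d) = m - totient m"
    using sum.remove[OF finD mD, of totient] by simp
  have mob: "(\<Sum>d\<in>D. S d) = Lf m" unfolding D_def S_def by (rule mobius_inversion[OF m])
  then have h6: "(\<Sum>d\<in>D - {m}. S d) = Lf m - S m"
    using sum.remove[OF finD mD, of S] by simp
  have "real n ^ m \<ge> real n ^ 1" using n m by (intro power_increasing) auto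
  moreover have "real n \<ge> 2" using n by simp
  ultimately have nm: "real n ^ m > 1" by (simp only: power_one_right)
  have h7: "real n ^ m - 1 = real n ^ m * exp (Lf m)"
  proof -
    have "1 - 1 / real n ^ m > 0" using nm by (simp add: divide_less_eq)
    then have "exp (Lf m) = 1 - 1 / real n ^ m" by (simp add: Lf_def)
    moreover have "real n ^ m * (1 - 1 / real n ^ m) = real n ^ m - 1"
      using nm n by (simp add: right_diff_distrib)
    ultimately show ?thesis by simp
  qed
  define A where "A = real n ^ (m - totient m) * exp (Lf m - S m)"
  define B where "B = real n ^ totient m * exp (S m)"
  have Apos: "A \<noteq> 0" using n by (simp add: A_def)
  have AB: "A * B = real n ^ m * exp (Lf m)"
  proof -
    have "A * B = real n ^ (m - totient m + totient m) * (exp (Lf m - S m) * exp (S m))"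
      by (simp add: A_def B_def power_add)
    also have "m - totient m + totient m = m" using totient_le[of m] by simp
    also have "exp (Lf m - S m) * exp (S m) = exp (Lf m)" by (simp add: exp_add[symmetric])
    finally show ?thesis .
  qed
  have "complex_of_real (A * B) = C m * complex_of_real A"
  proof -
    have "complex_of_real (A * B) = complex_of_real (real n ^ m - 1)" using AB h7 by simp
    also have "\<dots> = of_nat n ^ m - 1" by simp
    also have "\<dots> = C m * (\<Prod>d\<in>D - {m}. C d)" using h1 h2 by simp
    also have "\<dots> = C m * complex_of_real A" unfolding h3 h4 h5 h6 A_def ..
    finally show ?thesis .
  qed
  then have "C m = complex_of_real B" using Apos by (simp add: of_real_mult)
  then show ?case by (simp add: C_def B_def S_def Lf_def)
qed


lemma prod_subset_le:
  fixes g :: "'a \<Rightarrow> real"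
  assumes "finite B" "A \<subseteq> B" "\<And>x. x \<in> B \<Longrightarrow> 0 \<le> g x \<and> g x \<le> 1"
  shows "prod g B \<le> prod g A"
proof -
  have "prod g B = prod g (B - A) * prod g A" by (rule prod.subset_diff[OF assms(2) assms(1)])
  moreover have "prod g (B - A) \<le> 1" using assms by (intro prod_le_1) auto
  moreover have "prod g (B - A) \<ge> 0" using assms by (intro prod_nonneg) auto
  moreover have "prod g A \<ge> 0" using assms by (intro prod_nonneg) auto
  ultimately show ?thesis by (simp add: mult_left_le_one_le)
qed

theorem lemma2:
  fixes n m :: nat
  assumes "n \<ge> 2" and "m \<ge> 1"
  shows "(\<Prod>j. 1 - 1 / real n ^ Suc j) * real n ^ totient m \<le> Re (poly (cyclotomic m) (of_nat n))
    \<and> Re (poly (cyclotomic m) (of_nat n)) \<le> inverse (\<Prod>j. 1 - 1 / real n ^ Suc j) * real n ^ totient m"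
proof -
  have n2: "real n \<ge> 2" using assms(1) by simp
  have m0: "m > 0" using assms(2) by simp
  define f where "f = (\<lambda>j::nat. 1 - 1 / real n ^ Suc j)"
  define g where "g = (\<lambda>e::nat. 1 - 1 / real n ^ e)"
  have gbd: "0 < g e \<and> g e \<le> 1" if "e > 0" for e
  proof -
    have "real n ^ 1 \<le> real n ^ e" using n2 that by (intro power_increasing) auto
    then have "real n ^ e > 1" using n2 by (simp only: power_one_right)
    then show ?thesis by (simp add: g_def divide_less_eq)
  qed
  have fg: "f j = g (Suc j)" for j by (simp add: f_def g_def)
  have conv: "convergent_prod f"
  proof -
    define z where "z = (\<lambda>k::nat. - (1 / real n ^ Suc k))"
    have "f = (\<lambda>k. 1 + z k)" by (simp add: f_def z_def fun_eq_iff)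
    moreover have "convergent_prod (\<lambda>k. 1 + z k)"
    proof (rule summable_imp_convergent_prod_real)
      have "summable (\<lambda>k. (1 / real n) * (1 / real n) ^ k)"
        using n2 by (intro summable_mult summable_geometric) auto
      moreover have "(\<lambda>k. \<bar>z k\<bar>) = (\<lambda>k. (1 / real n) * (1 / real n) ^ k)"
        by (simp add: z_def fun_eq_iff power_divide)
      ultimately show "summable (\<lambda>k. \<bar>z k\<bar>)" by simp
      show "z k \<noteq> -1" for k
      proof -
        have "z k > -1" unfolding z_def using gbd[of "Suc k"] unfolding g_def by linarith
        then show ?thesis by simp
      qed
    qed
    ultimately show ?thesis by simp
  qed
  define P where "P = (\<Prod>j. 1 - 1 / real n ^ Suc j)"
  have Pf: "P = prodinf f" by (simp add: P_def f_def)
  have fbd: "0 \<le> f j \<and> f j \<le> 1" "f j \<noteq> 0" for j using gbd[of "Suc j"] unfolding fg by auto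
  have "P \<noteq> 0" unfolding Pf using conv fbd by (intro prodinf_nonzero) auto
  moreover have "P \<ge> 0"
  proof -
    have "(\<lambda>k. \<Prod>i\<le>k. f i) \<longlonglongrightarrow> prodinf f" by (rule convergent_prod_LIMSEQ[OF conv])
    moreover have "\<exists>N. \<forall>k\<ge>N. 0 \<le> (\<Prod>i\<le>k. f i)"
      using fbd by (auto intro!: prod_nonneg)
    ultimately show ?thesis unfolding Pf by (rule LIMSEQ_le_const)
  qed
  ultimately have Ppos: "P > 0" by simp
  have Pm: "P \<le> prod f {..<m}"
    unfolding Pf
  proof (rule prodinf_le_const[OF conv])
    fix N assume "N \<ge> m"
    then show "prod f {..<N} \<le> prod f {..<m}"
      using fbd by (intro prod_subset_le) auto
  qed
  also have "prod f {..<m} = prod g {1..m}"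
  proof -
    have "{1..m} = Suc ` {..<m}" by (simp add: image_Suc_lessThan)
    then show ?thesis by (simp add: prod.reindex fg)
  qed
  also have "prod g {1..m} \<le> prod g {e. e dvd m}"
  proof (rule prod_subset_le)
    show "{e. e dvd m} \<subseteq> {1..m}" using m0 by (auto intro: dvd_imp_le Nat.gr0I)
    show "0 \<le> g x \<and> g x \<le> 1" if "x \<in> {1..m}" for x using gbd[of x] that by auto
  qed simp
  finally have PQ: "P \<le> prod g {e. e dvd m}" .
  define Lf where "Lf = (\<lambda>e. ln (g e))"
  have Lneg: "Lf e \<le> 0" if "e dvd m" for e
  proof -
    have "e > 0" using that m0 by (auto intro!: Nat.gr0I)
    then show ?thesis using gbd[of e] by (simp add: Lf_def)
  qed
  have Qexp: "prod g {e. e dvd m} = exp (\<Sum>e\<in>{e. e dvd m}. Lf e)"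
  proof -
    have "exp (\<Sum>e\<in>{e. e dvd m}. Lf e) = (\<Prod>e\<in>{e. e dvd m}. exp (Lf e))"
      using m0 by (intro exp_sum) simp
    also have "\<dots> = prod g {e. e dvd m}"
    proof (rule prod.cong[OF refl])
      fix e assume "e \<in> {e. e dvd m}"
      then have "e > 0" using m0 by (auto intro!: Nat.gr0I)
      then show "exp (Lf e) = g e" using gbd[of e] by (simp add: Lf_def)
    qed
    finally show ?thesis by simp
  qed
  define S where "S = (\<Sum>e\<in>{e. e dvd m}. mu (m div e) * Lf e)"
  have C: "Re (poly (cyclotomic m) (of_nat n)) = real n ^ totient m * exp S"
    using cyclo_value[OF assms(1) m0] by (simp add: S_def Lf_def g_def)
  have S1: "(\<Sum>e\<in>{e. e dvd m}. Lf e) \<le> S"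
    unfolding S_def
  proof (rule sum_mono)
    fix e assume "e \<in> {e. e dvd m}"
    then have "Lf e \<le> 0" by (intro Lneg) auto
    moreover have "mu (m div e) \<le> 1" using mu_range by blast
    ultimately show "Lf e \<le> mu (m div e) * Lf e" using mult_nonneg_nonneg[of "1 - mu (m div e)" "- Lf e"] by (simp add: algebra_simps)
  qed
  have S2: "S \<le> - (\<Sum>e\<in>{e. e dvd m}. Lf e)"
    unfolding S_def sum_negf[symmetric]
  proof (rule sum_mono)
    fix e assume "e \<in> {e. e dvd m}"
    then have "Lf e \<le> 0" by (intro Lneg) auto
    moreover have "mu (m div e) \<ge> -1" using mu_range by blast
    ultimately show "mu (m div e) * Lf e \<le> - Lf e" using mult_nonneg_nonneg[of "1 + mu (m div e)" "- Lf e"] by (simp add: algebra_simps)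
  qed
  have npos: "real n ^ totient m > 0" using n2 by simp
  have lower: "P \<le> exp S"
    using PQ S1 unfolding Qexp by (meson exp_le_cancel_iff order_trans)
  have upper: "exp S \<le> inverse P"
  proof -
    have "exp S \<le> exp (- (\<Sum>e\<in>{e. e dvd m}. Lf e))" using S2 by simp
    also have "\<dots> = inverse (prod g {e. e dvd m})" by (simp add: Qexp exp_minus)
    also have "\<dots> \<le> inverse P" using PQ Ppos by (rule le_imp_inverse_le)
    finally show ?thesis .
  qed
  show ?thesis
    unfolding C P_def[symmetric]
    using lower upper npos by (simp add: mult_right_mono)
qed

end
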